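(* For all $N\subseteq\mathbf{U}$, $w\in\mathbb{W}(N)$ and $i\in N$, we have $\bar v^\star_{w^{r^\star}_{-i}}=(\bar v^\star_w)_{-i}$.
   Context: $\mathbf{U}$ is a finite set of players; cardinalities of $N,S,B$ are $n,s,b$. $\Pi(N)$ is the set of partitions of $N$ ($\Pi(\emptyset)=\{\emptyset\}$). $p^\star$ is the Ewens distribution $p^\star_N(\pi)=\frac{\prod_{B\in\pi}(b-1)!}{n!}$. $\pi_{+i\leadsto B}=(\pi\setminus\{B\})\cup\{B\cup\{i\}\}$ for $B\in\pi$, $\pi_{+i\leadsto\emptyset}=\pi\cup\{\{i\}\}$. Embedded coalitions $\mathcal{E}(N)=\{(S,\pi):S\subseteq N,\pi\in\Pi(N\setminus S)\}$; a TUX game on $N$ is $w:\mathcal{E}(N)\to\mathbb{R}$ with $w(\emptyset,\pi)=0$; $\mathbb{W}(N)$ their set. The restriction operator $r^\star$: $w^{r^\star}_{-i}\in\mathbb{W}(N\setminus\{i\})$, $w^{r^\star}_{-i}(S,\pi)=\frac{1}{n-s}w(S,\pi_{+i\leadsto\emptyset})+\sum_{B\in\pi}\frac{b}{n-s}w(S,\pi_{+i\leadsto B})$ for $(S,\pi)\in\mathcal{E}(N\setminus\{i\})$. For $w\in\mathbb{W}(M)$, the average TU game $\bar v^\star_w$ on $M$ is $\bar v^\star_w(S)=\sum_{\pi\in\Pi(M\setminus S)}p^\star_{M\setminus S}(\pi)w(S,\pi)$ for $S\subseteq M$. For a TU game $v$ on $N$, $v_{-i}$ is its restriction to subsets of $N\setminus\{i\}$.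 *)

theory Defs
  imports Complex_Main "HOL-Library.Disjoint_Sets"
begin

text \<open>Partitions of a set N (the empty set has exactly one partition, the empty one).\<close>
definition partitions :: "'a set \<Rightarrow> 'a set set set" where
  "partitions N = {P. partition_on N P}"

definition ewens :: "'a set \<Rightarrow> 'a set set \<Rightarrow> real" where
  "ewens N P = (\<Prod>B\<in>P. fact (card B - 1)) / fact (card N)"

definition add_to :: "'a set set \<Rightarrow> 'a \<Rightarrow> 'a set \<Rightarrow> 'a set set" where
  "add_to P i B = (if B = {} then insert {i} P else insert (insert i B) (P - {B}))"

text \<open>A TUX game on N: a function on embedded coalitions (S,P) with S \<subseteq> N and
  P a partition of N - S, vanishing on the empty coalition. Values outside the
  embedded coalitions are irrelevant.\<close>
definition tux_game :: "'a set \<Rightarrow> ('a set \<Rightarrow> 'a set set \<Rightarrow> real) \<Rightarrow> bool" where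
  "tux_game N w \<longleftrightarrow> (\<forall>P\<in>partitions N. w {} P = 0)"

definition restr :: "'a set \<Rightarrow> ('a set \<Rightarrow> 'a set set \<Rightarrow> real) \<Rightarrow> 'a \<Rightarrow> 'a set \<Rightarrow> 'a set set \<Rightarrow> real" where
  "restr N w i S P =
     1 / (real (card N) - real (card S)) * w S (add_to P i {})
     + (\<Sum>B\<in>P. real (card B) / (real (card N) - real (card S)) * w S (add_to P i B))"

definition avg_game :: "'a set \<Rightarrow> ('a set \<Rightarrow> 'a set set \<Rightarrow> real) \<Rightarrow> 'a set \<Rightarrow> real" where
  "avg_game M w S = (\<Sum>P\<in>partitions (M - S). ewens (M - S) P * w S P)"

end

theory Submission
  imports Defs
begin

lemma add_to_part:
  assumes P: "partition_on M P" and i: "i \<notin> M" and B: "B \<in> insert {} P"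
  shows "partition_on (insert i M) (add_to P i B)"
proof (cases "B = {}")
  case True
  then show ?thesis using P i unfolding add_to_def partition_on_def disjoint_def by auto
next
  case False
  with B have BP: "B \<in> P" by auto
  show ?thesis using P i BP False unfolding add_to_def partition_on_def disjoint_def
    by (auto; blast)
qed

lemma add_to_blk:
  assumes P: "partition_on M P" and i: "i \<notin> M" and B: "B \<in> insert {} P"
  shows "{C \<in> add_to P i B. i \<in> C} = {insert i B}"
  using P i B unfolding add_to_def partition_on_def by auto

lemma add_to_rem:
  assumes P: "partition_on M P" and i: "i \<notin> M" and B: "B \<in> insert {} P"
  shows "(\<lambda>C. C - {i}) ` add_to P i B - {{}} = P"
proof -
  have "\<And>C. C \<in> P \<Longrightarrow> C - {i} = C" using P i unfolding partition_on_def by auto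
  moreover have "{} \<notin> P" using P unfolding partition_on_def by auto
  ultimately show ?thesis using B i P unfolding add_to_def partition_on_def
    by (auto simp: image_iff)
qed

lemma add_to_surj:
  assumes Q: "partition_on (insert i M) Q" and i: "i \<notin> M"
  shows "\<exists>P B. partition_on M P \<and> B \<in> insert {} P \<and> Q = add_to P i B"
proof -
  obtain C where C: "C \<in> Q" "i \<in> C" using Q unfolding partition_on_def by auto
  have disj: "\<And>D. D \<in> Q \<Longrightarrow> D \<noteq> C \<Longrightarrow> i \<notin> D" using Q C unfolding partition_on_def disjoint_def by blast
  show ?thesis
  proof (cases "C - {i} = {}")
    case True
    hence Ci: "C = {i}" using C by auto
    have "Q = insert C (Q - {C})" using C by auto
    moreover have "disjnt C (\<Union>(Q - {C}))" using disj Ci by (auto simp: disjnt_def)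
    ultimately have "partition_on (insert i M - C) (Q - {C})" using Q partition_on_insert by metis
    moreover have "insert i M - C = M" using Ci i by auto
    ultimately have "partition_on M (Q - {C})" by simp
    moreover have "Q = add_to (Q - {C}) i {}" using C Ci unfolding add_to_def by auto
    ultimately show ?thesis by blast
  next
    case False
    define B where "B = C - {i}"
    have BQ: "B \<notin> Q"
    proof
      assume "B \<in> Q"
      moreover have "B \<noteq> C" using C B_def by auto
      ultimately have "B \<inter> C = {}" using Q C unfolding partition_on_def disjoint_def by blast
      thus False using False B_def by auto
    qed
    have "Q = insert C (Q - {C})" using C by auto
    moreover have dC: "disjnt C (\<Union>(Q - {C}))" using Q C unfolding partition_on_def disjoint_def disjnt_def by blast
    ultimately have R: "partition_on (insert i M - C) (Q - {C})" and CM: "C \<subseteq> insert i M"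
      using Q partition_on_insert by metis+
    have e: "M - B = insert i M - C" using C i B_def by auto
    have "disjnt B (\<Union>(Q - {C}))" using dC B_def by (auto simp: disjnt_def)
    moreover have "B \<subseteq> M" using CM i B_def by auto
    ultimately have "partition_on M (insert B (Q - {C}))" using R e False B_def partition_on_insert by metis
    moreover have "Q = add_to (insert B (Q - {C})) i B" using C False BQ unfolding add_to_def B_def
      by (auto simp: insert_absorb)
    ultimately show ?thesis by blast
  qed
qed

lemma sum_decomp:
  assumes M: "finite M" and i: "i \<notin> M"
  shows "(\<Sum>Q\<in>partitions (insert i M). f Q) = (\<Sum>P\<in>partitions M. \<Sum>B\<in>insert {} P. f (add_to P i B))"
proof -
  let ?S = "Sigma (partitions M) (\<lambda>P. insert {} P)"
  have fin: "finite (partitions M)" using M finitely_many_partition_on unfolding partitions_def by blast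
  have finP: "\<forall>P\<in>partitions M. finite (insert {} P)"
    using M finite_elements unfolding partitions_def by blast
  have "(\<Sum>P\<in>partitions M. \<Sum>B\<in>insert {} P. f (add_to P i B)) = (\<Sum>(P,B)\<in>?S. f (add_to P i B))"
    using sum.Sigma[OF fin finP] by simp
  also have "\<dots> = (\<Sum>Q\<in>(\<lambda>(P,B). add_to P i B) ` ?S. f Q)"
  proof -
    have "inj_on (\<lambda>(P,B). add_to P i B) ?S"
    proof (rule inj_onI)
      fix x y assume x: "x \<in> ?S" and y: "y \<in> ?S"
        and e: "(\<lambda>(P,B). add_to P i B) x = (\<lambda>(P,B). add_to P i B) y"
      obtain P B where xe: "x = (P,B)" by (cases x)
      obtain P' B' where ye: "y = (P',B')" by (cases y)
      have h1: "partition_on M P" "B \<in> insert {} P" using x xe by (auto simp: partitions_def)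
      have h2: "partition_on M P'" "B' \<in> insert {} P'" using y ye by (auto simp: partitions_def)
      have eq: "add_to P i B = add_to P' i B'" using e xe ye by simp
      have "P = P'" using add_to_rem[OF h1(1) i h1(2)] add_to_rem[OF h2(1) i h2(2)] eq by simp
      moreover have "insert i B = insert i B'"
        using add_to_blk[OF h1(1) i h1(2)] add_to_blk[OF h2(1) i h2(2)] eq by simp
      moreover have "B \<subseteq> M" using h1 by (auto simp: partition_on_def)
      moreover have "B' \<subseteq> M" using h2 by (auto simp: partition_on_def)
      ultimately have "P = P'" "B = B'" using i by (simp, metis insert_ident subsetD)
      thus "x = y" using xe ye by simp
    qed
    from sum.reindex[OF this, of f] show ?thesis by (simp add: comp_def case_prod_beta')
  qed
  also have "(\<lambda>(P,B). add_to P i B) ` ?S = partitions (insert i M)"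
  proof
    show "(\<lambda>(P,B). add_to P i B) ` ?S \<subseteq> partitions (insert i M)"
    proof clarify
      fix P B assume "P \<in> partitions M" "B \<in> insert {} P"
      thus "add_to P i B \<in> partitions (insert i M)" using add_to_part[OF _ i] by (simp add: partitions_def)
    qed
    show "partitions (insert i M) \<subseteq> (\<lambda>(P,B). add_to P i B) ` ?S"
    proof
      fix Q assume "Q \<in> partitions (insert i M)"
      hence "partition_on (insert i M) Q" by (simp add: partitions_def)
      from add_to_surj[OF this i] obtain P B where pb: "partition_on M P" "B \<in> insert {} P" "Q = add_to P i B"
        by blast
      show "Q \<in> (\<lambda>(P,B). add_to P i B) ` ?S"
        by (rule rev_image_eqI[of "(P,B)"]) (use pb in \<open>simp_all add: partitions_def\<close>)
    qed
  qed
  finally show ?thesis by simp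
qed

lemma ewens_add:
  assumes M: "finite M" and i: "i \<notin> M" and P: "partition_on M P" and B: "B \<in> insert {} P"
  shows "ewens (insert i M) (add_to P i B) = ewens M P * (if B = {} then 1 else real (card B)) / real (card (insert i M))"
proof -
  have finP: "finite P" using M P finite_elements by blast
  have iP: "\<And>C. C \<in> P \<Longrightarrow> i \<notin> C" using P i unfolding partition_on_def by auto
  have cM: "card (insert i M) = Suc (card M)" using M i by simp
  have fM: "fact (card (insert i M)) = real (card (insert i M)) * fact (card M)"
    unfolding cM by simp
  have "(\<Prod>C\<in>add_to P i B. fact (card C - 1) :: real) = (\<Prod>C\<in>P. fact (card C - 1)) * (if B = {} then 1 else real (card B))"
  proof (cases "B = {}")
    case True
    have "{i} \<notin> P" using iP by auto
    then show ?thesis using True finP unfolding add_to_def by simp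
  next
    case False
    hence BP: "B \<in> P" using B by auto
    have "insert i B \<notin> P - {B}" using iP by auto
    hence "(\<Prod>C\<in>add_to P i B. fact (card C - 1) :: real) = fact (card (insert i B) - 1) * (\<Prod>C\<in>P - {B}. fact (card C - 1))"
      using False finP unfolding add_to_def by simp
    moreover have "(\<Prod>C\<in>P. fact (card C - 1) :: real) = fact (card B - 1) * (\<Prod>C\<in>P - {B}. fact (card C - 1))"
      by (rule prod.remove[OF finP BP])
    moreover have "finite B" using BP P M unfolding partition_on_def by (meson Union_upper finite_subset)
    moreover have "card B \<ge> 1" using \<open>finite B\<close> False by (simp add: Suc_leI card_gt_0_iff)
    moreover have "fact (card (insert i B) - 1) = (real (card B) * fact (card B - 1))"
      using \<open>finite B\<close> iP[OF BP] \<open>card B \<ge> 1\<close> by (simp add: fact_reduce)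
    ultimately show ?thesis using False by simp
  qed
  thus ?thesis unfolding ewens_def fM by simp
qed

theorem lemma2:
  fixes N :: "'a set" and w :: "'a set \<Rightarrow> 'a set set \<Rightarrow> real" and i :: 'a
  assumes "finite N" and "tux_game N w" and "i \<in> N"
  shows "\<forall>S. S \<subseteq> N - {i} \<longrightarrow> avg_game (N - {i}) (restr N w i) S = avg_game N w S"
proof (intro allI impI)
  fix S assume S: "S \<subseteq> N - {i}"
  define M where "M = N - {i} - S"
  have iM: "i \<notin> M" unfolding M_def by auto
  have finM: "finite M" unfolding M_def using assms(1) by auto
  have NS: "N - S = insert i M" using S assms(3) unfolding M_def by auto
  have SN: "S \<subseteq> N" using S by auto
  have finS: "finite S" using SN assms(1) finite_subset by blast
  have "card (N - S) = card N - card S" using card_Diff_subset[OF finS SN] .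
  moreover have "card S \<le> card N" using card_mono[OF assms(1) SN] .
  ultimately have cardeq: "real (card N) - real (card S) = real (card (insert i M))"
    using NS by (simp add: of_nat_diff)
  have "avg_game N w S = (\<Sum>Q\<in>partitions (insert i M). ewens (insert i M) Q * w S Q)"
    by (simp add: avg_game_def NS)
  also have "\<dots> = (\<Sum>P\<in>partitions M. \<Sum>B\<in>insert {} P. ewens (insert i M) (add_to P i B) * w S (add_to P i B))"
    by (rule sum_decomp[OF finM iM])
  also have "\<dots> = (\<Sum>P\<in>partitions M. ewens M P * restr N w i S P)"
  proof (rule sum.cong[OF refl])
    fix P assume "P \<in> partitions M"
    hence P: "partition_on M P" by (simp add: partitions_def)
    have eP: "{} \<notin> P" using P by (simp add: partition_on_def)
    have finP: "finite P" using finM P finite_elements by blast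
    let ?c = "real (card (insert i M))"
    have "(\<Sum>B\<in>insert {} P. ewens (insert i M) (add_to P i B) * w S (add_to P i B))
      = ewens (insert i M) (add_to P i {}) * w S (add_to P i {})
        + (\<Sum>B\<in>P. ewens (insert i M) (add_to P i B) * w S (add_to P i B))"
      using finP eP by simp
    also have "ewens (insert i M) (add_to P i {}) = ewens M P / ?c"
      using ewens_add[OF finM iM P, of "{}"] by simp
    also have "(\<Sum>B\<in>P. ewens (insert i M) (add_to P i B) * w S (add_to P i B))
       = (\<Sum>B\<in>P. ewens M P * (real (card B) / ?c * w S (add_to P i B)))"
    proof (rule sum.cong[OF refl])
      fix B assume B: "B \<in> P"
      hence "B \<noteq> {}" using eP by auto
      thus "ewens (insert i M) (add_to P i B) * w S (add_to P i B) = ewens M P * (real (card B) / ?c * w S (add_to P i B))"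
        using ewens_add[OF finM iM P, of B] B by simp
    qed
    also have "ewens M P / ?c * w S (add_to P i {}) + (\<Sum>B\<in>P. ewens M P * (real (card B) / ?c * w S (add_to P i B)))
       = ewens M P * restr N w i S P"
      unfolding restr_def cardeq by (simp add: sum_distrib_left algebra_simps sum_divide_distrib)
    finally show "(\<Sum>B\<in>insert {} P. ewens (insert i M) (add_to P i B) * w S (add_to P i B)) = ewens M P * restr N w i S P" .
  qed
  also have "\<dots> = avg_game (N - {i}) (restr N w i) S"
    by (simp add: avg_game_def M_def)
  finally show "avg_game (N - {i}) (restr N w i) S = avg_game N w S" by simp
qed

end
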